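(* Let $C,D$ be simple $k$-string diagrams. Then $\pi(C)=\pi(D)$ if and only if $\ell_i(C)=\ell_i(D)$ for all $i$ and there exist permutations $\sigma_i\in\Sigma_{\ell_i(D)}$ ($1\le i\le k$; with $\sigma_0=\mathrm{id}_{\langle1\rangle}$), each order preserving on the fibres of $v^i(D)$ (i.e. $a<b$ and $v^i(D)(a)=v^i(D)(b)$ imply $\sigma_i(a)<\sigma_i(b)$), such that $v^i(C)=\sigma_{i-1}\circ v^i(D)\circ\sigma_i^{-1}$ for all $i$.
   Context: Write $\langle\ell\rangle=\{1<\dots<\ell\}$. A simple $k$-string diagram $D$ consists of natural numbers $\ell_0(D)=1,\ell_1(D),\dots,\ell_k(D)$ and arbitrary functions $v^i(D)\colon\langle\ell_i(D)\rangle\to\langle\ell_{i-1}(D)\rangle$; a globular $k$-pasting diagram is the same data with all $v^i$ order preserving. For a simple $k$-string diagram $D$ define orders $\overline{D}_i$ on the sets $\langle\ell_i(D)\rangle$ inductively: $\overline{D}_1=\langle\ell_1\rangle$ with its usual order, and $\overline{D}_{i+1}$ is the unique total order making $v^{i+1}\times\mathrm{id}\colon\overline{D}_{i+1}\to\overline{D}_i\times\langle\ell_{i+1}\rangle$ order preserving, the target carrying the lexicographic order ($(a,b)\le(a',b')$ iff $a<a'$, or $a=a'$ and $b\le b'$). Then all $v^i$ are order preserving for the orders $\overline{D}_i$, and $\pi(D)$ is the unique globular $k$-pasting diagram isomorphic to $(\overline{D}_k\to\cdots\to\overline{D}_1\to\langle1\rangle)$ via levelwise order-preserving bijections commuting with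 the maps. *)

theory Defs
  imports "HOL-Combinatorics.Permutations"
begin

text \<open>A (k-string) diagram is given by the lengths l i (i = 0..k) and the maps
  v i : {1..l i} -> {1..l (i-1)} (i = 1..k).  Values outside these domains are irrelevant
  for the notion of diagram; they are normalised to 0 in the output of pi.\<close>

type_synonym diagram = "(nat \<Rightarrow> nat) \<times> (nat \<Rightarrow> nat \<Rightarrow> nat)"

definition ell :: "diagram \<Rightarrow> nat \<Rightarrow> nat" where "ell D = fst D"
definition vmap :: "diagram \<Rightarrow> nat \<Rightarrow> nat \<Rightarrow> nat" where "vmap D = snd D"

definition simple_diagram :: "nat \<Rightarrow> diagram \<Rightarrow> bool" where
  "simple_diagram k D \<longleftrightarrow> ell D 0 = 1 \<and>
     (\<forall>i\<in>{1..k}. \<forall>a\<in>{1..ell D i}. vmap D i a \<in> {1..ell D (i - 1)})"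

definition globular_diagram :: "nat \<Rightarrow> diagram \<Rightarrow> bool" where
  "globular_diagram k D \<longleftrightarrow> simple_diagram k D \<and>
     (\<forall>i\<in>{1..k}. \<forall>a\<in>{1..ell D i}. \<forall>b\<in>{1..ell D i}. a \<le> b \<longrightarrow> vmap D i a \<le> vmap D i b)"

definition normal_diagram :: "nat \<Rightarrow> diagram \<Rightarrow> bool" where
  "normal_diagram k D \<longleftrightarrow> (\<forall>i>k. ell D i = 0) \<and>
     (\<forall>i a. \<not> (1 \<le> i \<and> i \<le> k \<and> a \<in> {1..ell D i}) \<longrightarrow> vmap D i a = 0)"

text \<open>The strict version of the order \<open>D_i\<close> bar: level 0 is the one-point order,
  and a <_(i+1) b iff (v a, a) <_lex (v b, b) with respect to <_i on the first component
  (level 1 is then the usual order, since v^1 is constant).\<close>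
fun ord_lt :: "diagram \<Rightarrow> nat \<Rightarrow> nat \<Rightarrow> nat \<Rightarrow> bool" where
  "ord_lt D 0 a b = False"
| "ord_lt D (Suc i) a b \<longleftrightarrow> ord_lt D i (vmap D (Suc i) a) (vmap D (Suc i) b) \<or>
      (vmap D (Suc i) a = vmap D (Suc i) b \<and> a < b)"

text \<open>Isomorphism from (\<open>D_k\<close> bar -> ... -> \<open>D_1\<close> bar -> <1>) to E by levelwise
  order-preserving bijections commuting with the maps.\<close>
definition diagram_iso :: "nat \<Rightarrow> diagram \<Rightarrow> diagram \<Rightarrow> (nat \<Rightarrow> nat \<Rightarrow> nat) \<Rightarrow> bool" where
  "diagram_iso k D E f \<longleftrightarrow>
     (\<forall>i\<le>k. bij_betw (f i) {1..ell D i} {1..ell E i} \<and>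
        (\<forall>a\<in>{1..ell D i}. \<forall>b\<in>{1..ell D i}. ord_lt D i a b \<longleftrightarrow> f i a < f i b)) \<and>
     (\<forall>i\<in>{1..k}. \<forall>a\<in>{1..ell D i}. f (i - 1) (vmap D i a) = vmap E i (f i a))"

definition pi_diag :: "nat \<Rightarrow> diagram \<Rightarrow> diagram" where
  "pi_diag k D = (THE E. globular_diagram k E \<and> normal_diagram k E \<and> (\<exists>f. diagram_iso k D E f))"

end

theory Submission
  imports Defs
begin

lemma ord_irrefl: "\<not> ord_lt D i a a"
  by (induction i arbitrary: a) auto

lemma ord_trans: "ord_lt D i a b \<Longrightarrow> ord_lt D i b c \<Longrightarrow> ord_lt D i a c"
  by (induction i arbitrary: a b c) auto

lemma ord_total:
  assumes "simple_diagram k D" "i \<le> k" "a \<in> {1..ell D i}" "b \<in> {1..ell D i}" "a \<noteq> b"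
  shows "ord_lt D i a b \<or> ord_lt D i b a"
  using assms(2-)
proof (induction i arbitrary: a b)
  case 0
  then show ?case using assms(1) by (auto simp: simple_diagram_def)
next
  case (Suc j)
  have "vmap D (Suc j) a \<in> {1..ell D j}" "vmap D (Suc j) b \<in> {1..ell D j}"
    using assms(1) Suc.prems unfolding simple_diagram_def
    by (metis atLeastAtMost_iff diff_Suc_1 le_add1 plus_1_eq_Suc)+
  then show ?case using Suc by (cases "vmap D (Suc j) a = vmap D (Suc j) b") auto
qed

lemma rank_props:
  fixes R :: "nat \<Rightarrow> nat \<Rightarrow> bool" and A :: "nat set"
  assumes fin: "finite A"
   and irr: "\<And>x. \<not> R x x"
   and tr: "\<And>x y z. R x y \<Longrightarrow> R y z \<Longrightarrow> R x z"
   and tot: "\<And>x y. x\<in>A \<Longrightarrow> y\<in>A \<Longrightarrow> x \<noteq> y \<Longrightarrow> R x y \<or> R y x"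
  shows "bij_betw (\<lambda>a. card {b\<in>A. R b a} + 1) A {1..card A}"
    and "\<forall>a\<in>A. \<forall>b\<in>A. R a b \<longleftrightarrow> card {c\<in>A. R c a} + 1 < card {c\<in>A. R c b} + 1"
proof -
  define rk where "rk = (\<lambda>a. card {b\<in>A. R b a} + 1)"
  have mono: "rk a < rk b" if "a \<in> A" "b \<in> A" "R a b" for a b
  proof -
    have "{c\<in>A. R c a} \<subset> {c\<in>A. R c b}"
      using that irr tr by blast
    then show ?thesis unfolding rk_def using fin
      by (simp add: psubset_card_mono)
  qed
  have iff: "\<forall>a\<in>A. \<forall>b\<in>A. R a b \<longleftrightarrow> rk a < rk b"
    using mono tot by (metis less_asym less_irrefl)
  have inj: "inj_on rk A"
    using mono tot by (metis inj_onI less_irrefl)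
  have rng: "rk ` A \<subseteq> {1..card A}"
  proof
    fix x assume "x \<in> rk ` A"
    then obtain a where a: "a \<in> A" "x = rk a" by auto
    have "{b\<in>A. R b a} \<subseteq> A - {a}" using irr by auto
    then have "card {b\<in>A. R b a} \<le> card (A - {a})" using fin by (simp add: card_mono)
    also have "\<dots> = card A - 1" using a fin by simp
    finally have "card {b\<in>A. R b a} \<le> card A - 1" .
    show "x \<in> {1..card A}" using a fin unfolding rk_def
    proof -
      have "card A \<ge> 1" using a fin by (metis One_nat_def Suc_leI card_gt_0_iff empty_iff)
      then show ?thesis using \<open>card {b\<in>A. R b a} \<le> card A - 1\<close> a unfolding rk_def by auto
    qed
  qed
  have "rk ` A = {1..card A}"
    using card_subset_eq[OF _ rng] inj fin by (simp add: card_image)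
  then have "bij_betw rk A {1..card A}" using inj by (simp add: bij_betw_def)
  then show "bij_betw (\<lambda>a. card {b\<in>A. R b a} + 1) A {1..card A}" unfolding rk_def .
  show "\<forall>a\<in>A. \<forall>b\<in>A. R a b \<longleftrightarrow> card {c\<in>A. R c a} + 1 < card {c\<in>A. R c b} + 1"
    using iff unfolding rk_def by simp
qed

lemma iso_val:
  fixes R :: "nat \<Rightarrow> nat \<Rightarrow> bool"
  assumes "bij_betw f A {1..m}" "\<forall>a\<in>A. \<forall>b\<in>A. R a b \<longleftrightarrow> f a < f b" "a \<in> A"
  shows "f a = card {b\<in>A. R b a} + 1"
proof -
  have fa: "f a \<in> {1..m}" using assms(1,3) by (meson bij_betwE)
  have "f ` {b\<in>A. R b a} = {1..<f a}"
  proof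
    show "f ` {b\<in>A. R b a} \<subseteq> {1..<f a}"
    proof
      fix x assume "x \<in> f ` {b\<in>A. R b a}"
      then obtain b where b: "b \<in> A" "R b a" "x = f b" by blast
      have "f b \<in> {1..m}" using assms(1) b(1) by (meson bij_betwE)
      moreover have "f b < f a" using bspec[OF bspec[OF assms(2) b(1)] assms(3)] b(2) by simp
      ultimately show "x \<in> {1..<f a}" using b by simp
    qed
    show "{1..<f a} \<subseteq> f ` {b\<in>A. R b a}"
    proof
      fix c assume c: "c \<in> {1..<f a}"
      then have "c \<in> {1..m}" using fa by auto
      then have "c \<in> f ` A" using assms(1) by (simp add: bij_betw_def)
      then obtain b where "b \<in> A" "f b = c" by (rule imageE) simp
      moreover have "R b a" using bspec[OF bspec[OF assms(2) \<open>b \<in> A\<close>] assms(3)] c \<open>f b = c\<close> by simp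
      ultimately show "c \<in> f ` {b\<in>A. R b a}" by blast
    qed
  qed
  moreover have "inj_on f {b\<in>A. R b a}"
    by (rule inj_on_subset[OF bij_betw_imp_inj_on[OF assms(1)]]) auto
  ultimately have "card {b\<in>A. R b a} = f a - 1"
    using card_image[of f "{b\<in>A. R b a}"] by simp
  then show ?thesis using fa by auto
qed


definition rank :: "diagram \<Rightarrow> nat \<Rightarrow> nat \<Rightarrow> nat" where
  "rank D i a = card {b\<in>{1..ell D i}. ord_lt D i b a} + 1"

lemma rank_bij:
  assumes "simple_diagram k D" "i \<le> k"
  shows "bij_betw (rank D i) {1..ell D i} {1..ell D i}"
    and "\<forall>a\<in>{1..ell D i}. \<forall>b\<in>{1..ell D i}. ord_lt D i a b \<longleftrightarrow> rank D i a < rank D i b"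
proof -
  have tot: "\<And>x y. x\<in>{1..ell D i} \<Longrightarrow> y\<in>{1..ell D i} \<Longrightarrow> x \<noteq> y \<Longrightarrow> ord_lt D i x y \<or> ord_lt D i y x"
    using ord_total[OF assms] by blast
  note rp = rank_props[of "{1..ell D i}" "ord_lt D i", OF _ ord_irrefl ord_trans tot]
  show "bij_betw (rank D i) {1..ell D i} {1..ell D i}"
    using rp(1) unfolding rank_def[abs_def] by simp
  show "\<forall>a\<in>{1..ell D i}. \<forall>b\<in>{1..ell D i}. ord_lt D i a b \<longleftrightarrow> rank D i a < rank D i b"
    using rp(2) unfolding rank_def by simp
qed

lemma simpleD:
  assumes "simple_diagram k D" "1 \<le> i" "i \<le> k" "a \<in> {1..ell D i}"
  shows "vmap D i a \<in> {1..ell D (i - 1)}"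
  using assms unfolding simple_diagram_def by auto

definition piE :: "nat \<Rightarrow> diagram \<Rightarrow> diagram" where
  "piE k D = (\<lambda>i. if i \<le> k then ell D i else 0,
     \<lambda>i c. if 1 \<le> i \<and> i \<le> k \<and> c \<in> {1..ell D i}
       then rank D (i - 1) (vmap D i (inv_into {1..ell D i} (rank D i) c)) else 0)"

lemma ell_piE: "ell (piE k D) i = (if i \<le> k then ell D i else 0)"
  by (simp add: piE_def ell_def)
lemma vmap_piE: "vmap (piE k D) i c = (if 1 \<le> i \<and> i \<le> k \<and> c \<in> {1..ell D i}
       then rank D (i - 1) (vmap D i (inv_into {1..ell D i} (rank D i) c)) else 0)"
  by (simp add: piE_def vmap_def)

lemma piE_props:
  assumes S: "simple_diagram k D"
  shows "globular_diagram k (piE k D)" "normal_diagram k (piE k D)"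
    "diagram_iso k D (piE k D) (rank D)"
proof -
  have e0: "ell D 0 = 1" using S by (simp add: simple_diagram_def)
  have rk_in: "rank D i a \<in> {1..ell D i}" if "i \<le> k" "a \<in> {1..ell D i}" for i a
    using rank_bij(1)[OF S that(1)] that(2) by (meson bij_betwE)
  have inv_in: "inv_into {1..ell D i} (rank D i) c \<in> {1..ell D i}
      \<and> rank D i (inv_into {1..ell D i} (rank D i) c) = c"
    if "i \<le> k" "c \<in> {1..ell D i}" for i c
  proof -
    have b: "bij_betw (rank D i) {1..ell D i} {1..ell D i}" by (rule rank_bij(1)[OF S that(1)])
    then have "c \<in> rank D i ` {1..ell D i}" using that(2) by (simp add: bij_betw_def)
    then show ?thesis using inv_into_into[of c "rank D i" "{1..ell D i}"] f_inv_into_f[of c "rank D i"] by simp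
  qed
  have inv_rk: "inv_into {1..ell D i} (rank D i) (rank D i a) = a"
    if "i \<le> k" "a \<in> {1..ell D i}" for i a
    using bij_betw_imp_inj_on[OF rank_bij(1)[OF S that(1)]] that(2) by (simp add: inv_into_f_f)
  have simp_piE: "simple_diagram k (piE k D)"
    unfolding simple_diagram_def
  proof (intro conjI ballI)
    show "ell (piE k D) 0 = 1" using e0 by (simp add: ell_piE)
    fix i c assume i: "i \<in> {1..k}" and c: "c \<in> {1..ell (piE k D) i}"
    then have c': "c \<in> {1..ell D i}" by (simp add: ell_piE)
    have "vmap D i (inv_into {1..ell D i} (rank D i) c) \<in> {1..ell D (i - 1)}"
      using simpleD[OF S] i inv_in[of i c] c' by auto
    then show "vmap (piE k D) i c \<in> {1..ell (piE k D) (i - 1)}"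
      using rk_in[of "i - 1"] i c' by (auto simp add: vmap_piE ell_piE)
  qed
  show "globular_diagram k (piE k D)"
    unfolding globular_diagram_def
  proof (intro conjI ballI impI simp_piE)
    fix i c d assume i: "i \<in> {1..k}" and c: "c \<in> {1..ell (piE k D) i}"
      and d: "d \<in> {1..ell (piE k D) i}" and cd: "c \<le> d"
    then have c': "c \<in> {1..ell D i}" and d': "d \<in> {1..ell D i}" by (simp_all add: ell_piE)
    define a where "a = inv_into {1..ell D i} (rank D i) c"
    define b where "b = inv_into {1..ell D i} (rank D i) d"
    have a: "a \<in> {1..ell D i}" "rank D i a = c" using inv_in[of i c] i c' a_def by auto
    have b: "b \<in> {1..ell D i}" "rank D i b = d" using inv_in[of i d] i d' b_def by auto
    obtain j where j: "i = Suc j" using i by (cases i) auto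
    have va: "vmap D i a \<in> {1..ell D j}" and vb: "vmap D i b \<in> {1..ell D j}"
      using simpleD[OF S, of i a] simpleD[OF S, of i b] i a b j by auto
    show "vmap (piE k D) i c \<le> vmap (piE k D) i d"
    proof (cases "c = d")
      case True then show ?thesis by simp
    next
      case False
      then have "rank D i a < rank D i b" using a b cd by simp
      then have "ord_lt D i a b" using rank_bij(2)[OF S, of i] i a b by auto
      then have "ord_lt D j (vmap D i a) (vmap D i b) \<or> vmap D i a = vmap D i b" using j by auto
      then have "rank D j (vmap D i a) \<le> rank D j (vmap D i b)"
        using rank_bij(2)[OF S, of j] va vb i j by fastforce
      then show ?thesis using i c' d' j by (simp add: vmap_piE a_def b_def)
    qed
  qed
  show "normal_diagram k (piE k D)"
    unfolding normal_diagram_def by (auto simp: ell_piE vmap_piE)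
  show "diagram_iso k D (piE k D) (rank D)"
    unfolding diagram_iso_def
  proof (intro conjI allI impI ballI)
    fix i assume i: "i \<le> k"
    show "bij_betw (rank D i) {1..ell D i} {1..ell (piE k D) i}"
      using rank_bij(1)[OF S i] i by (simp add: ell_piE)
    fix a b assume "a \<in> {1..ell D i}" "b \<in> {1..ell D i}"
    then show "ord_lt D i a b \<longleftrightarrow> rank D i a < rank D i b"
      using rank_bij(2)[OF S i] by blast
  next
    fix i a assume i: "i \<in> {1..k}" and a: "a \<in> {1..ell D i}"
    show "rank D (i - 1) (vmap D i a) = vmap (piE k D) i (rank D i a)"
      using i a rk_in[of i a] inv_rk[of i a] by (simp add: vmap_piE)
  qed
qed


lemma iso_bij: "diagram_iso k D E f \<Longrightarrow> i \<le> k \<Longrightarrow> bij_betw (f i) {1..ell D i} {1..ell E i}"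
  unfolding diagram_iso_def by blast
lemma iso_ord: "diagram_iso k D E f \<Longrightarrow> i \<le> k \<Longrightarrow>
   \<forall>a\<in>{1..ell D i}. \<forall>b\<in>{1..ell D i}. ord_lt D i a b \<longleftrightarrow> f i a < f i b"
  unfolding diagram_iso_def by blast
lemma iso_comm: "diagram_iso k D E f \<Longrightarrow> 1 \<le> i \<Longrightarrow> i \<le> k \<Longrightarrow> a \<in> {1..ell D i} \<Longrightarrow>
   f (i - 1) (vmap D i a) = vmap E i (f i a)"
  unfolding diagram_iso_def by auto

lemma iso_ell: "diagram_iso k D E f \<Longrightarrow> i \<le> k \<Longrightarrow> ell E i = ell D i"
  using bij_betw_same_card[OF iso_bij] by fastforce

lemma iso_unique:
  assumes S: "simple_diagram k D" and I1: "diagram_iso k D E1 f1" and I2: "diagram_iso k D E2 f2"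
    and N1: "normal_diagram k E1" and N2: "normal_diagram k E2"
  shows "E1 = E2"
proof -
  have fv: "f1 i a = f2 i a" if "i \<le> k" "a \<in> {1..ell D i}" for i a
    using iso_val[OF iso_bij[OF I1 that(1)] iso_ord[OF I1 that(1)] that(2)]
          iso_val[OF iso_bij[OF I2 that(1)] iso_ord[OF I2 that(1)] that(2)] by simp
  have el: "ell E1 i = ell E2 i" for i
  proof (cases "i \<le> k")
    case True then show ?thesis using iso_ell[OF I1] iso_ell[OF I2] by simp
  next
    case False then show ?thesis using N1 N2 unfolding normal_diagram_def by simp
  qed
  have vm: "vmap E1 i c = vmap E2 i c" for i c
  proof (cases "1 \<le> i \<and> i \<le> k \<and> c \<in> {1..ell E1 i}")
    case True
    then have i: "1 \<le> i" "i \<le> k" and c: "c \<in> {1..ell E1 i}" by auto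
    have "c \<in> f1 i ` {1..ell D i}" using iso_bij[OF I1 i(2)] c by (simp add: bij_betw_def)
    then obtain a where a: "a \<in> {1..ell D i}" "c = f1 i a" by (rule imageE) simp
    have va: "vmap D i a \<in> {1..ell D (i - 1)}" using simpleD[OF S i a(1)] .
    have "vmap E1 i c = f1 (i - 1) (vmap D i a)" using iso_comm[OF I1 i a(1)] a(2) by simp
    also have "\<dots> = f2 (i - 1) (vmap D i a)" using fv[OF _ va] i by simp
    also have "\<dots> = vmap E2 i (f2 i a)" using iso_comm[OF I2 i a(1)] .
    also have "\<dots> = vmap E2 i c" using fv[OF i(2) a(1)] a(2) by simp
    finally show ?thesis .
  next
    case False
    then have "vmap E1 i c = 0" "vmap E2 i c = 0" using N1 N2 el[of i] unfolding normal_diagram_def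
      by metis+
    then show ?thesis by simp
  qed
  have "fst E1 = fst E2" using el unfolding ell_def by (rule ext)
  moreover have "snd E1 = snd E2" using vm unfolding vmap_def by (intro ext)
  ultimately show ?thesis by (rule prod_eqI)
qed

lemma pi_eq:
  assumes S: "simple_diagram k D" and G: "globular_diagram k E" and N: "normal_diagram k E"
    and I: "diagram_iso k D E f"
  shows "pi_diag k D = E"
  unfolding pi_diag_def
proof (rule the_equality)
  show "globular_diagram k E \<and> normal_diagram k E \<and> (\<exists>f. diagram_iso k D E f)" using G N I by blast
  fix E' assume "globular_diagram k E' \<and> normal_diagram k E' \<and> (\<exists>f. diagram_iso k D E' f)"
  then obtain f' where "normal_diagram k E'" "diagram_iso k D E' f'" by blast
  then show "E' = E" using iso_unique[OF S _ I _ N] by blast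
qed

lemma pi_props:
  assumes S: "simple_diagram k D"
  shows "globular_diagram k (pi_diag k D) \<and> normal_diagram k (pi_diag k D) \<and>
     (\<exists>f. diagram_iso k D (pi_diag k D) f)"
  using pi_eq[OF S piE_props[OF S]] piE_props[OF S] by auto


lemma forward:
  assumes SC: "simple_diagram k C" and SD: "simple_diagram k D"
    and eq: "pi_diag k C = pi_diag k D"
  shows "(\<forall>i\<le>k. ell C i = ell D i) \<and>
     (\<exists>\<sigma> :: nat \<Rightarrow> nat \<Rightarrow> nat. \<sigma> 0 = id \<and>
        (\<forall>i\<in>{1..k}. \<sigma> i permutes {1..ell D i} \<and>
           (\<forall>a\<in>{1..ell D i}. \<forall>b\<in>{1..ell D i}.
              a < b \<and> vmap D i a = vmap D i b \<longrightarrow> \<sigma> i a < \<sigma> i b)) \<and>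
        (\<forall>i\<in>{1..k}. \<forall>a\<in>{1..ell D i}.
           vmap C i a = (\<sigma> (i - 1) \<circ> vmap D i \<circ> inv (\<sigma> i)) a))"
proof -
  define E where "E = pi_diag k D"
  obtain fD where ID: "diagram_iso k D E fD" using pi_props[OF SD] E_def by blast
  obtain fC where IC: "diagram_iso k C E fC" using pi_props[OF SC] E_def eq by auto
  have L: "ell C i = ell D i" if "i \<le> k" for i
    using iso_ell[OF IC that] iso_ell[OF ID that] by simp
  define \<sigma> where "\<sigma> = (\<lambda>i. if i = 0 then id else
     (\<lambda>a. if a \<in> {1..ell D i} then inv_into {1..ell C i} (fC i) (fD i a) else a))"
  have s0: "\<sigma> 0 = id" by (simp add: \<sigma>_def)
  have sb: "bij_betw (\<sigma> i) {1..ell D i} {1..ell D i}" if i: "1 \<le> i" "i \<le> k" for i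
  proof -
    have b1: "bij_betw (fD i) {1..ell D i} {1..ell E i}" by (rule iso_bij[OF ID i(2)])
    have b2: "bij_betw (inv_into {1..ell C i} (fC i)) {1..ell E i} {1..ell C i}"
      by (rule bij_betw_inv_into[OF iso_bij[OF IC i(2)]])
    have "bij_betw (inv_into {1..ell C i} (fC i) \<circ> fD i) {1..ell D i} {1..ell D i}"
      using bij_betw_trans[OF b1 b2] L[OF i(2)] by simp
    moreover have "\<And>a. a \<in> {1..ell D i} \<Longrightarrow> (inv_into {1..ell C i} (fC i) \<circ> fD i) a = \<sigma> i a"
      using i by (simp add: \<sigma>_def)
    ultimately show ?thesis using bij_betw_cong by blast
  qed
  have sp: "\<sigma> i permutes {1..ell D i}" if i: "1 \<le> i" "i \<le> k" for i
  proof (rule bij_imp_permutes[OF sb[OF i]])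
    fix x assume "x \<notin> {1..ell D i}" then show "\<sigma> i x = x" using i by (auto simp add: \<sigma>_def)
  qed
  have sC: "\<sigma> i b \<in> {1..ell C i} \<and> fC i (\<sigma> i b) = fD i b"
    if i: "1 \<le> i" "i \<le> k" and b: "b \<in> {1..ell D i}" for i b
  proof -
    have "fD i b \<in> {1..ell E i}" using iso_bij[OF ID i(2)] b by (meson bij_betwE)
    then have "fD i b \<in> fC i ` {1..ell C i}" using iso_bij[OF IC i(2)] by (simp add: bij_betw_def)
    then show ?thesis using b i inv_into_into[of "fD i b" "fC i" "{1..ell C i}"]
       f_inv_into_f[of "fD i b" "fC i"] by (simp add: \<sigma>_def)
  qed
  have P4: "vmap C i (\<sigma> i b) = \<sigma> (i - 1) (vmap D i b)"
    if i: "1 \<le> i" "i \<le> k" and b: "b \<in> {1..ell D i}" for i b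
  proof -
    have a': "\<sigma> i b \<in> {1..ell C i}" and fa: "fC i (\<sigma> i b) = fD i b" using sC[OF i b] by auto
    have vC: "vmap C i (\<sigma> i b) \<in> {1..ell C (i - 1)}" using simpleD[OF SC i a'] .
    have vD: "vmap D i b \<in> {1..ell D (i - 1)}" using simpleD[OF SD i b] .
    have key: "fC (i - 1) (vmap C i (\<sigma> i b)) = fD (i - 1) (vmap D i b)"
      using iso_comm[OF IC i a'] iso_comm[OF ID i b] fa by simp
    show ?thesis
    proof (cases "i = 1")
      case True
      then have "ell C (i - 1) = 1" "ell D (i - 1) = 1" using SC SD by (auto simp: simple_diagram_def)
      then show ?thesis using vC vD True by (simp add: \<sigma>_def)
    next
      case False
      then have i1: "i - 1 \<noteq> 0" "i - 1 \<le> k" using i by auto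
      have inj: "inj_on (fC (i - 1)) {1..ell C (i - 1)}" using iso_bij[OF IC i1(2)] bij_betw_imp_inj_on by blast
      have "\<sigma> (i - 1) (vmap D i b) = inv_into {1..ell C (i - 1)} (fC (i - 1)) (fD (i - 1) (vmap D i b))"
        using vD i1 by (simp add: \<sigma>_def)
      also have "\<dots> = inv_into {1..ell C (i - 1)} (fC (i - 1)) (fC (i - 1) (vmap C i (\<sigma> i b)))"
        using key by simp
      also have "\<dots> = vmap C i (\<sigma> i b)" using inv_into_f_f[OF inj vC] .
      finally show ?thesis by simp
    qed
  qed
  have fib: "\<sigma> i a < \<sigma> i b"
    if i: "1 \<le> i" "i \<le> k" and a: "a \<in> {1..ell D i}" and b: "b \<in> {1..ell D i}"
      and ab: "a < b" and v: "vmap D i a = vmap D i b" for i a b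
  proof -
    obtain j where j: "i = Suc j" using i by (cases i) auto
    have "ord_lt D i a b" using j ab v by simp
    then have "fD i a < fD i b" using iso_ord[OF ID i(2)] a b by blast
    then have lt: "fC i (\<sigma> i a) < fC i (\<sigma> i b)" using sC[OF i a] sC[OF i b] by simp
    have "ord_lt C i (\<sigma> i a) (\<sigma> i b)"
      using iso_ord[OF IC i(2)] sC[OF i a] sC[OF i b] lt by blast
    moreover have "vmap C i (\<sigma> i a) = vmap C i (\<sigma> i b)" using P4[OF i a] P4[OF i b] v by simp
    ultimately show ?thesis using j ord_irrefl by auto
  qed
  have eqn: "vmap C i a = (\<sigma> (i - 1) \<circ> vmap D i \<circ> inv (\<sigma> i)) a"
    if i: "1 \<le> i" "i \<le> k" and a: "a \<in> {1..ell D i}" for i a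
  proof -
    have p: "\<sigma> i permutes {1..ell D i}" by (rule sp[OF i])
    have b: "inv (\<sigma> i) a \<in> {1..ell D i}"
      using permutes_in_image[OF permutes_inv[OF p]] a by simp
    have "\<sigma> i (inv (\<sigma> i) a) = a" using permutes_inverses(1)[OF p] .
    then show ?thesis using P4[OF i b] by simp
  qed
  show ?thesis
    apply (intro conjI allI impI exI[of _ \<sigma>])
    subgoal using L by blast
    subgoal by (rule s0)
    subgoal using sp fib by auto
    subgoal using eqn by auto
    done
qed


lemma backward:
  assumes SC: "simple_diagram k C" and SD: "simple_diagram k D"
    and L: "\<forall>i\<le>k. ell C i = ell D i"
    and s0: "\<sigma> 0 = id"
    and sp: "\<forall>i\<in>{1..k}. \<sigma> i permutes {1..ell D i} \<and>
           (\<forall>a\<in>{1..ell D i}. \<forall>b\<in>{1..ell D i}.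
              a < b \<and> vmap D i a = vmap D i b \<longrightarrow> \<sigma> i a < \<sigma> i b)"
    and eqn: "\<forall>i\<in>{1..k}. \<forall>a\<in>{1..ell D i}.
           vmap C i a = (\<sigma> (i - 1) \<circ> vmap D i \<circ> inv (\<sigma> i)) a"
  shows "pi_diag k C = pi_diag k D"
proof -
  define E where "E = pi_diag k D"
  have PE: "globular_diagram k E" "normal_diagram k E" using pi_props[OF SD] E_def by auto
  obtain fD where ID: "diagram_iso k D E fD" using pi_props[OF SD] E_def by blast
  have inv1: "inv (\<sigma> j) (\<sigma> j x) = x" if "j \<le> k" for j x
  proof (cases "j = 0")
    case True then show ?thesis using s0 by simp
  next
    case False then have "\<sigma> j permutes {1..ell D j}" using sp that by auto
    then show ?thesis by (rule permutes_inverses(2))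
  qed
  have inv2: "\<sigma> j (inv (\<sigma> j) x) = x" if "j \<le> k" for j x
  proof (cases "j = 0")
    case True then show ?thesis using s0 by simp
  next
    case False then have "\<sigma> j permutes {1..ell D j}" using sp that by auto
    then show ?thesis by (rule permutes_inverses(1))
  qed
  have binv: "bij_betw (inv (\<sigma> j)) {1..ell D j} {1..ell D j}" if "j \<le> k" for j
  proof (cases "j = 0")
    case True then show ?thesis using s0 by simp
  next
    case False then have "\<sigma> j permutes {1..ell D j}" using sp that by auto
    then show ?thesis by (rule permutes_imp_bij[OF permutes_inv])
  qed
  have sin: "\<sigma> j x \<in> {1..ell D j}" if "j \<le> k" "x \<in> {1..ell D j}" for j x
  proof (cases "j = 0")
    case True then show ?thesis using s0 that by simp
  next
    case False then have p: "\<sigma> j permutes {1..ell D j}" using sp that by auto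
    show ?thesis using permutes_in_image[OF p, of x] that(2) by simp
  qed
  have vC: "vmap C (Suc j) (\<sigma> (Suc j) x) = \<sigma> j (vmap D (Suc j) x)"
    if "Suc j \<le> k" "x \<in> {1..ell D (Suc j)}" for j x
  proof -
    have "vmap C (Suc j) (\<sigma> (Suc j) x) = \<sigma> j (vmap D (Suc j) (inv (\<sigma> (Suc j)) (\<sigma> (Suc j) x)))"
      using eqn sin[OF that] that(1) by auto
    then show ?thesis using inv1[OF that(1)] by simp
  qed
  have LL: "\<forall>x\<in>{1..ell D i}. \<forall>y\<in>{1..ell D i}. ord_lt C i (\<sigma> i x) (\<sigma> i y) \<longleftrightarrow> ord_lt D i x y"
    if "i \<le> k" for i
    using that
  proof (induction i)
    case 0 then show ?case by simp
  next
    case (Suc j)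
    show ?case
    proof (intro ballI)
      fix x y assume x: "x \<in> {1..ell D (Suc j)}" and y: "y \<in> {1..ell D (Suc j)}"
      have i: "1 \<le> Suc j" "Suc j \<le> k" using Suc.prems by auto
      have vx: "vmap D (Suc j) x \<in> {1..ell D j}" using simpleD[OF SD i x] by simp
      have vy: "vmap D (Suc j) y \<in> {1..ell D j}" using simpleD[OF SD i y] by simp
      have IH: "ord_lt C j (\<sigma> j (vmap D (Suc j) x)) (\<sigma> j (vmap D (Suc j) y)) \<longleftrightarrow>
          ord_lt D j (vmap D (Suc j) x) (vmap D (Suc j) y)"
        using Suc.IH Suc.prems vx vy by auto
      have injs: "\<sigma> j (vmap D (Suc j) x) = \<sigma> j (vmap D (Suc j) y) \<longleftrightarrow> vmap D (Suc j) x = vmap D (Suc j) y"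
      proof -
        have jk: "j \<le> k" using Suc.prems by simp
        have "inj (\<sigma> j)"
        proof (rule injI)
          fix u w assume "\<sigma> j u = \<sigma> j w"
          then have "inv (\<sigma> j) (\<sigma> j u) = inv (\<sigma> j) (\<sigma> j w)" by (rule arg_cong)
          then show "u = w" unfolding inv1[OF jk] .
        qed
        then show ?thesis by (rule inj_eq)
      qed
      have fibr: "\<forall>a\<in>{1..ell D (Suc j)}. \<forall>b\<in>{1..ell D (Suc j)}.
              a < b \<and> vmap D (Suc j) a = vmap D (Suc j) b \<longrightarrow> \<sigma> (Suc j) a < \<sigma> (Suc j) b"
        using sp i by auto
      have lt: "\<sigma> (Suc j) x < \<sigma> (Suc j) y \<longleftrightarrow> x < y" if "vmap D (Suc j) x = vmap D (Suc j) y"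
      proof
        assume "x < y" then show "\<sigma> (Suc j) x < \<sigma> (Suc j) y" using bspec[OF bspec[OF fibr x] y] that by simp
      next
        assume h: "\<sigma> (Suc j) x < \<sigma> (Suc j) y"
        show "x < y"
        proof (rule ccontr)
          assume "\<not> x < y"
          then have "x = y \<or> y < x" by auto
          then show False
          proof
            assume "x = y" then show False using h by simp
          next
            assume "y < x" then have "\<sigma> (Suc j) y < \<sigma> (Suc j) x" using bspec[OF bspec[OF fibr y] x] that by simp
            then show False using h by simp
          qed
        qed
      qed
      show "ord_lt C (Suc j) (\<sigma> (Suc j) x) (\<sigma> (Suc j) y) \<longleftrightarrow> ord_lt D (Suc j) x y"
        using vC[OF i(2) x] vC[OF i(2) y] IH injs lt by auto
    qed
  qed
  define g where "g = (\<lambda>i a. fD i (inv (\<sigma> i) a))"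
  have IC: "diagram_iso k C E g"
    unfolding diagram_iso_def
  proof (intro conjI allI impI ballI)
    fix i assume i: "i \<le> k"
    have "bij_betw (fD i \<circ> inv (\<sigma> i)) {1..ell D i} {1..ell E i}"
      by (rule bij_betw_trans[OF binv[OF i] iso_bij[OF ID i]])
    then show "bij_betw (g i) {1..ell C i} {1..ell E i}"
      using L i by (simp add: g_def o_def)
    fix a b assume a: "a \<in> {1..ell C i}" and b: "b \<in> {1..ell C i}"
    have a': "a \<in> {1..ell D i}" and b': "b \<in> {1..ell D i}" using a b L i by auto
    have x: "inv (\<sigma> i) a \<in> {1..ell D i}" using binv[OF i] a' by (meson bij_betwE)
    have y: "inv (\<sigma> i) b \<in> {1..ell D i}" using binv[OF i] b' by (meson bij_betwE)
    have "ord_lt C i a b \<longleftrightarrow> ord_lt D i (inv (\<sigma> i) a) (inv (\<sigma> i) b)"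
      using bspec[OF bspec[OF LL[OF i] x] y] inv2[OF i, of a] inv2[OF i, of b] by simp
    also have "\<dots> \<longleftrightarrow> g i a < g i b" using iso_ord[OF ID i] x y by (simp add: g_def)
    finally show "ord_lt C i a b \<longleftrightarrow> g i a < g i b" .
  next
    fix i a assume i: "i \<in> {1..k}" and a: "a \<in> {1..ell C i}"
    have i': "1 \<le> i" "i \<le> k" "i - 1 \<le> k" using i by auto
    have a': "a \<in> {1..ell D i}" using a L i' by auto
    have x: "inv (\<sigma> i) a \<in> {1..ell D i}" using binv[OF i'(2)] a' by (meson bij_betwE)
    have "g (i - 1) (vmap C i a) = fD (i - 1) (inv (\<sigma> (i - 1)) (\<sigma> (i - 1) (vmap D i (inv (\<sigma> i) a))))"
      using eqn i a' by (simp add: g_def)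
    also have "\<dots> = fD (i - 1) (vmap D i (inv (\<sigma> i) a))" using inv1[OF i'(3)] by simp
    also have "\<dots> = vmap E i (g i a)" using iso_comm[OF ID i'(1,2) x] by (simp add: g_def)
    finally show "g (i - 1) (vmap C i a) = vmap E i (g i a)" .
  qed
  show ?thesis using pi_eq[OF SC PE IC] E_def by simp
qed

theorem mainTheorem5:
  fixes k :: nat and C D :: diagram
  assumes "simple_diagram k C" and "simple_diagram k D"
  shows "pi_diag k C = pi_diag k D \<longleftrightarrow>
    ((\<forall>i\<le>k. ell C i = ell D i) \<and>
     (\<exists>\<sigma> :: nat \<Rightarrow> nat \<Rightarrow> nat. \<sigma> 0 = id \<and>
        (\<forall>i\<in>{1..k}. \<sigma> i permutes {1..ell D i} \<and>
           (\<forall>a\<in>{1..ell D i}. \<forall>b\<in>{1..ell D i}.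
              a < b \<and> vmap D i a = vmap D i b \<longrightarrow> \<sigma> i a < \<sigma> i b)) \<and>
        (\<forall>i\<in>{1..k}. \<forall>a\<in>{1..ell D i}.
           vmap C i a = (\<sigma> (i - 1) \<circ> vmap D i \<circ> inv (\<sigma> i)) a)))"
proof
  assume "pi_diag k C = pi_diag k D"
  then show "(\<forall>i\<le>k. ell C i = ell D i) \<and>
     (\<exists>\<sigma> :: nat \<Rightarrow> nat \<Rightarrow> nat. \<sigma> 0 = id \<and>
        (\<forall>i\<in>{1..k}. \<sigma> i permutes {1..ell D i} \<and>
           (\<forall>a\<in>{1..ell D i}. \<forall>b\<in>{1..ell D i}.
              a < b \<and> vmap D i a = vmap D i b \<longrightarrow> \<sigma> i a < \<sigma> i b)) \<and>
        (\<forall>i\<in>{1..k}. \<forall>a\<in>{1..ell D i}.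
           vmap C i a = (\<sigma> (i - 1) \<circ> vmap D i \<circ> inv (\<sigma> i)) a))"
    by (rule forward[OF assms])
next
  assume h: "(\<forall>i\<le>k. ell C i = ell D i) \<and>
     (\<exists>\<sigma> :: nat \<Rightarrow> nat \<Rightarrow> nat. \<sigma> 0 = id \<and>
        (\<forall>i\<in>{1..k}. \<sigma> i permutes {1..ell D i} \<and>
           (\<forall>a\<in>{1..ell D i}. \<forall>b\<in>{1..ell D i}.
              a < b \<and> vmap D i a = vmap D i b \<longrightarrow> \<sigma> i a < \<sigma> i b)) \<and>
        (\<forall>i\<in>{1..k}. \<forall>a\<in>{1..ell D i}.
           vmap C i a = (\<sigma> (i - 1) \<circ> vmap D i \<circ> inv (\<sigma> i)) a))"
  then obtain \<sigma> where s0: "\<sigma> 0 = id" and "\<forall>i\<in>{1..k}. \<sigma> i permutes {1..ell D i} \<and>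
           (\<forall>a\<in>{1..ell D i}. \<forall>b\<in>{1..ell D i}.
              a < b \<and> vmap D i a = vmap D i b \<longrightarrow> \<sigma> i a < \<sigma> i b)"
    and "\<forall>i\<in>{1..k}. \<forall>a\<in>{1..ell D i}.
           vmap C i a = (\<sigma> (i - 1) \<circ> vmap D i \<circ> inv (\<sigma> i)) a" by blast
  then show "pi_diag k C = pi_diag k D" using backward[where \<sigma>=\<sigma>, OF assms conjunct1[OF h] s0] by blast
qed

end
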